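(* Let $Y=f(\boldsymbol X^\intercal\boldsymbol\beta,\varepsilon)$ with $\boldsymbol X\sim N_p(0,\mathbb I_p)$, $\varepsilon$ independent of $\boldsymbol X$, and $(f,\varepsilon,\boldsymbol\beta)\in\mathcal F_A$ for some $A>0$. Then for every $j\in\operatorname{supp}(\boldsymbol\beta)$, $$\frac As\le\operatorname{Var}(\mathfrak m_j(Y))\le\frac1s,$$ and $\operatorname{Var}(\mathfrak m_j(Y))=0$ for $j\notin\operatorname{supp}(\boldsymbol\beta)$.
   Context: $\mathfrak m_j(y)=\mathbb E[\boldsymbol X^j\mid Y=y]$. The class $\mathcal F_A$ consists of triples $(f,\varepsilon,\boldsymbol\beta)$ such that $\operatorname{Var}(\mathbb E[Z\mid f(Z,\varepsilon)])\ge A$ where $Z\sim N(0,1)$ is independent of $\varepsilon$; $\boldsymbol\beta\in\mathbb R^p$ has exactly $s$ nonzero entries, each in $\{\pm1/\sqrt s\}$; and $(f,\varepsilon)$ is sliced stable: there exist $0<l<1<K$, $M>0$ such that for every integer $H>M$ and every partition $-\infty=a_1<\dots<a_{H+1}=+\infty$ with $l/H\le\mathbb P(a_h<Y\le a_{h+1})\le K/H$ for all $h$, there are $0\le\kappa<1$, $C>0$ (depending on $l,K,M$) with $\sum_{h=1}^H\operatorname{Var}[\mathfrak m_j(Y)\mid a_h<Y\le a_{h+1}]\le CH^{\kappa}\operatorname{Var}[\mathfrak m_j(Y)]$ for all $j\in\operatorname{supp}(\boldsymbol\beta)$. *)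

theory Defs
  imports "HOL-Probability.Probability"
begin

definition Var :: "'a measure \<Rightarrow> ('a \<Rightarrow> real) \<Rightarrow> real" where
  "Var M V = (\<integral>x. (V x - (\<integral>y. V y \<partial>M))\<^sup>2 \<partial>M)"

definition cVar_event :: "'a measure \<Rightarrow> 'a set \<Rightarrow> ('a \<Rightarrow> real) \<Rightarrow> real" where
  "cVar_event M B V =
     (let c = (\<integral>y. indicator B y * V y \<partial>M) / measure M B
      in (\<integral>x. indicator B x * (V x - c)\<^sup>2 \<partial>M) / measure M B)"

text \<open>Conditional expectation E[V | Y] as a random variable (i.e. m(Y)).\<close>
definition cond_exp_given :: "'a measure \<Rightarrow> ('a \<Rightarrow> real) \<Rightarrow> ('a \<Rightarrow> real) \<Rightarrow> ('a \<Rightarrow> real)" where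
  "cond_exp_given M Y V = real_cond_exp M (vimage_algebra (space M) Y borel) V"

definition slice :: "'a measure \<Rightarrow> ('a \<Rightarrow> real) \<Rightarrow> (nat \<Rightarrow> ereal) \<Rightarrow> nat \<Rightarrow> 'a set" where
  "slice M Y a h = {\<omega> \<in> space M. a h < ereal (Y \<omega>) \<and> ereal (Y \<omega>) \<le> a (Suc h)}"

definition sliced_stable ::
  "'a measure \<Rightarrow> nat \<Rightarrow> (nat \<Rightarrow> 'a \<Rightarrow> real) \<Rightarrow> ('a \<Rightarrow> real) \<Rightarrow> (nat \<Rightarrow> real) \<Rightarrow> bool" where
  "sliced_stable M p X Y \<beta> \<longleftrightarrow>
     (\<exists>l K Mc::real. 0 < l \<and> l < 1 \<and> 1 < K \<and> 0 < Mc \<and>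
       (\<exists>\<kappa> C::real. 0 \<le> \<kappa> \<and> \<kappa> < 1 \<and> 0 < C \<and>
         (\<forall>H::nat. real H > Mc \<longrightarrow>
           (\<forall>a::nat \<Rightarrow> ereal.
              a 1 = -\<infinity> \<and> a (H+1) = \<infinity> \<and> (\<forall>h\<in>{1..H}. a h < a (Suc h)) \<and>
              (\<forall>h\<in>{1..H}. l / real H \<le> measure M (slice M Y a h) \<and>
                            measure M (slice M Y a h) \<le> K / real H)
            \<longrightarrow> (\<forall>j<p. \<beta> j \<noteq> 0 \<longrightarrow>
                  (\<Sum>h=1..H. cVar_event M (slice M Y a h) (cond_exp_given M Y (X j)))
                    \<le> C * real H powr \<kappa> * Var M (cond_exp_given M Y (X j)))))))"

definition in_F ::
  "real \<Rightarrow> nat \<Rightarrow> nat \<Rightarrow> 'a measure \<Rightarrow> 'e measure \<Rightarrow> (nat \<Rightarrow> 'a \<Rightarrow> real) \<Rightarrow>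
   (real \<Rightarrow> 'e \<Rightarrow> real) \<Rightarrow> ('a \<Rightarrow> 'e) \<Rightarrow> (nat \<Rightarrow> real) \<Rightarrow> bool" where
  "in_F A p s M N X f \<epsilon> \<beta> \<longleftrightarrow>
     (\<forall>Z. distributed M lborel Z std_normal_density \<and> Z \<in> borel_measurable M \<and>
          prob_space.indep_set M (sets (vimage_algebra (space M) Z borel)) (sets (vimage_algebra (space M) \<epsilon> N))
          \<longrightarrow> Var M (cond_exp_given M (\<lambda>\<omega>. f (Z \<omega>) (\<epsilon> \<omega>)) Z) \<ge> A) \<and>
     card {j. j < p \<and> \<beta> j \<noteq> 0} = s \<and>
     (\<forall>j<p. \<beta> j \<noteq> 0 \<longrightarrow> \<beta> j = 1 / sqrt (real s) \<or> \<beta> j = - 1 / sqrt (real s)) \<and>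
     sliced_stable M p X (\<lambda>\<omega>. f (\<Sum>j<p. X j \<omega> * \<beta> j) (\<epsilon> \<omega>)) \<beta>"

end

theory Submission imports Defs begin

lemma sets_vimage_comp_subset:
  assumes V: "V \<in> measurable M D" and h: "h \<in> measurable D T"
  shows "sets (vimage_algebra (space M) (\<lambda>\<omega>. h (V \<omega>)) T) \<subseteq> sets (vimage_algebra (space M) V D)"
proof -
  have f1: "(\<lambda>\<omega>. h (V \<omega>)) \<in> space M \<rightarrow> space T" using measurable_space[OF measurable_comp[OF V h]] by (auto simp: comp_def)
  have f2: "V \<in> space M \<rightarrow> space D" using measurable_space[OF V] by auto
  show ?thesis
    unfolding sets_vimage_algebra2[OF f1] sets_vimage_algebra2[OF f2]
  proof safe
    fix A assume A: "A \<in> sets T"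
    show "\<exists>B. (\<lambda>\<omega>. h (V \<omega>)) -` A \<inter> space M = V -` B \<inter> space M \<and> B \<in> sets D"
      by (rule exI[of _ "h -` A \<inter> space D"]) (use A f2 measurable_sets[OF h A] in auto)
  qed
qed

lemma indep_set_mono1:
  assumes "prob_space M" "prob_space.indep_set M A B" "A' \<subseteq> A"
  shows "prob_space.indep_set M A' B"
proof -
  interpret prob_space M by fact
  show ?thesis using assms(2,3) unfolding indep_set_def
    using indep_sets_mono_sets[of "case_bool A B" UNIV "case_bool A' B"] by (auto split: bool.split)
qed

lemma (in prob_space) pair_law:
  assumes ind: "indep_set (sets (vimage_algebra (space M) W D)) (sets (vimage_algebra (space M) e N))"
    and W: "W \<in> measurable M D" and e: "e \<in> measurable M N"
  shows "distr M (D \<Otimes>\<^sub>M N) (\<lambda>\<omega>. (W \<omega>, e \<omega>)) = distr M D W \<Otimes>\<^sub>M distr M N e"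
proof -
  have ev: "\<And>a b. a \<in> sets D \<Longrightarrow> b \<in> sets N \<Longrightarrow>
     prob (W -` a \<inter> space M \<inter> (e -` b \<inter> space M)) = prob (W -` a \<inter> space M) * prob (e -` b \<inter> space M)"
  proof -
    fix a b assume a: "a \<in> sets D" and b: "b \<in> sets N"
    have "W -` a \<inter> space M \<in> sets (vimage_algebra (space M) W D)" using a by (rule in_vimage_algebra)
    moreover have "e -` b \<inter> space M \<in> sets (vimage_algebra (space M) e N)" using b by (rule in_vimage_algebra)
    ultimately show "prob (W -` a \<inter> space M \<inter> (e -` b \<inter> space M)) = prob (W -` a \<inter> space M) * prob (e -` b \<inter> space M)"
      using ind unfolding indep_sets2_eq by blast
  qed
  have XY: "(\<lambda>x. (W x, e x)) \<in> measurable M (D \<Otimes>\<^sub>M N)" using W e by (rule measurable_Pair)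
  interpret X: prob_space "distr M D W" by (rule prob_space_distr) fact
  interpret Y: prob_space "distr M N e" by (rule prob_space_distr) fact
  interpret XY: pair_prob_space "distr M D W" "distr M N e" ..
  show ?thesis
  proof (rule pair_measure_eqI[symmetric])
    show "sigma_finite_measure (distr M D W)" ..
    show "sigma_finite_measure (distr M N e)" ..
    fix A B assume A: "A \<in> sets (distr M D W)" and B: "B \<in> sets (distr M N e)"
    have "emeasure (distr M (D \<Otimes>\<^sub>M N) (\<lambda>x. (W x, e x))) (A \<times> B) = emeasure M ((\<lambda>x. (W x, e x)) -` (A \<times> B) \<inter> space M)"
      using A B by (intro emeasure_distr[OF XY]) auto
    also have "\<dots> = emeasure M (W -` A \<inter> space M) * emeasure M (e -` B \<inter> space M)"
      using ev[of A B] A B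
      by (simp add: emeasure_eq_measure measure_nonneg ennreal_mult Int_def conj_commute conj_left_commute)
    also have "\<dots> = emeasure (distr M D W) A * emeasure (distr M N e) B"
      using W e A B by (simp add: emeasure_distr)
    finally show "emeasure (distr M D W) A * emeasure (distr M N e) B = emeasure (distr M (D \<Otimes>\<^sub>M N) (\<lambda>x. (W x, e x))) (A \<times> B)" by simp
  qed simp
qed

lemma (in prob_space) PiM_law:
  assumes I: "I \<noteq> {}" and ind: "indep_vars (\<lambda>_. borel) W I"
    and d: "\<And>i. i \<in> I \<Longrightarrow> distributed M lborel (W i) std_normal_density"
  shows "distr M (PiM I (\<lambda>_. borel)) (\<lambda>\<omega>. \<lambda>i\<in>I. W i \<omega>) = PiM I (\<lambda>_. density lborel std_normal_density)"
proof -
  have rv: "random_variable borel (W i)" if i: "i \<in> I" for i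
    using distributed_measurable[OF d[OF i]] by simp
  have "distr M (PiM I (\<lambda>_. borel)) (\<lambda>\<omega>. \<lambda>i\<in>I. W i \<omega>) = PiM I (\<lambda>i. distr M borel (W i))"
    using indep_vars_iff_distr_eq_PiM'[OF I rv] ind by simp
  also have "\<dots> = PiM I (\<lambda>_. density lborel std_normal_density)"
  proof (rule PiM_cong)
    fix i assume i: "i \<in> I"
    have "distr M borel (W i) = distr M lborel (W i)" by (rule distr_cong) auto
    also have "\<dots> = density lborel std_normal_density"
      using d[OF i] by (simp add: distributed_distr_eq_density)
    finally show "distr M borel (W i) = density lborel std_normal_density" .
  qed simp
  finally show ?thesis .
qed

lemma (in prob_space) perm_sign_family:
  assumes I: "I \<noteq> {}" and ind: "indep_vars (\<lambda>_. borel) X I"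
    and d: "\<And>i. i \<in> I \<Longrightarrow> distributed M lborel (X i) std_normal_density"
    and \<pi>: "bij_betw \<pi> I I" and c: "\<And>i. i \<in> I \<Longrightarrow> c i = 1 \<or> c i = -1"
  shows "indep_vars (\<lambda>_. borel) (\<lambda>i \<omega>. c i * X (\<pi> i) \<omega>) I"
    "\<And>i. i \<in> I \<Longrightarrow> distributed M lborel (\<lambda>\<omega>. c i * X (\<pi> i) \<omega>) std_normal_density"
proof -
  have \<pi>I: "\<pi> i \<in> I" if "i \<in> I" for i using \<pi> that by (auto simp: bij_betw_def)
  have rv: "random_variable borel (X i)" if i: "i \<in> I" for i
    using distributed_measurable[OF d[OF i]] by simp
  let ?Nn = "density lborel std_normal_density"
  let ?D = "PiM I (\<lambda>_. borel :: real measure)"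
  have sD: "sets ?D = sets (PiM I (\<lambda>_. ?Nn))" by (rule sets_PiM_cong) auto
  have Xv: "(\<lambda>\<omega>. \<lambda>i\<in>I. X i \<omega>) \<in> measurable M ?D"
    using rv by (intro measurable_restrict) auto
  have T: "(\<lambda>\<omega>. \<lambda>n\<in>I. \<omega> (\<pi> n)) \<in> measurable ?D ?D"
    using \<pi>I by (intro measurable_restrict) (auto intro: measurable_component_singleton)
  have ind\<pi>: "indep_vars (\<lambda>_. borel) (\<lambda>i. X (\<pi> i)) I"
  proof -
    have "distr M ?D (\<lambda>\<omega>. \<lambda>i\<in>I. X (\<pi> i) \<omega>) = distr M ?D ((\<lambda>\<omega>. \<lambda>n\<in>I. \<omega> (\<pi> n)) \<circ> (\<lambda>\<omega>. \<lambda>i\<in>I. X i \<omega>))"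
      by (rule distr_cong) (auto simp: \<pi>I fun_eq_iff)
    also have "\<dots> = distr (distr M ?D (\<lambda>\<omega>. \<lambda>i\<in>I. X i \<omega>)) ?D (\<lambda>\<omega>. \<lambda>n\<in>I. \<omega> (\<pi> n))"
      by (rule distr_distr[symmetric, OF T Xv])
    also have "\<dots> = distr (PiM I (\<lambda>_. ?Nn)) ?D (\<lambda>\<omega>. \<lambda>n\<in>I. \<omega> (\<pi> n))"
      using PiM_law[OF I ind d] by simp
    also have "\<dots> = distr (PiM I (\<lambda>_. ?Nn)) (PiM I (\<lambda>_. ?Nn)) (\<lambda>\<omega>. \<lambda>n\<in>I. \<omega> (\<pi> n))"
      by (rule distr_cong) (auto simp: sD)
    also have "\<dots> = PiM I (\<lambda>_. ?Nn)"
      using distr_PiM_reindex[of I "\<lambda>_. ?Nn" \<pi> I] \<pi> prob_space_normal_density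
      by (auto simp: bij_betw_def)
    also have "\<dots> = PiM I (\<lambda>i. distr M borel (X (\<pi> i)))"
    proof (rule PiM_cong)
      fix i assume i: "i \<in> I"
      have "distr M borel (X (\<pi> i)) = distr M lborel (X (\<pi> i))" by (rule distr_cong) auto
      also have "\<dots> = ?Nn"
        using d[OF \<pi>I[OF i]] by (simp add: distributed_distr_eq_density)
      finally show "?Nn = distr M borel (X (\<pi> i))" by simp
    qed simp
    finally show ?thesis
      using indep_vars_iff_distr_eq_PiM'[OF I, where M'="\<lambda>_. borel" and X="\<lambda>i. X (\<pi> i)"] rv \<pi>I by auto
  qed
  show "indep_vars (\<lambda>_. borel) (\<lambda>i \<omega>. c i * X (\<pi> i) \<omega>) I"
    using indep_vars_compose2[OF ind\<pi>, where Y="\<lambda>i x. c i * x" and N="\<lambda>_. borel"] by auto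
  fix i assume i: "i \<in> I"
  have "distributed M lborel (\<lambda>\<omega>. 0 + c i * X (\<pi> i) \<omega>) (normal_density (0 + c i * 0) (\<bar>c i\<bar> * 1))"
    using c[OF i] by (intro normal_density_affine) (auto intro: d \<pi>I i)
  then show "distributed M lborel (\<lambda>\<omega>. c i * X (\<pi> i) \<omega>) std_normal_density"
    using c[OF i] by auto
qed

lemma sum_perm_sign:
  fixes c \<beta> x :: "nat \<Rightarrow> real"
  assumes \<pi>: "bij_betw \<pi> {..<p} {..<p}" and cond: "\<And>i. i < p \<Longrightarrow> c i * \<beta> i = \<beta> (\<pi> i)"
  shows "(\<Sum>i<p. c i * x (\<pi> i) * \<beta> i) = (\<Sum>i<p. x i * \<beta> i)"
proof -
  have "(\<Sum>i<p. c i * x (\<pi> i) * \<beta> i) = (\<Sum>i<p. x (\<pi> i) * \<beta> (\<pi> i))"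
    proof (rule sum.cong[OF refl])
    fix i assume "i \<in> {..<p}"
    then have "c i * \<beta> i = \<beta> (\<pi> i)" using cond by simp
    then show "c i * x (\<pi> i) * \<beta> i = x (\<pi> i) * \<beta> (\<pi> i)"
    proof -
      have "c i * x (\<pi> i) * \<beta> i = x (\<pi> i) * (c i * \<beta> i)" by (simp add: mult_ac)
      then show ?thesis using \<open>c i * \<beta> i = \<beta> (\<pi> i)\<close> by simp
    qed
  qed
  also have "\<dots> = (\<Sum>i<p. x i * \<beta> i)"
    using sum.reindex_bij_betw[OF \<pi>, of "\<lambda>k. x k * \<beta> k"] by simp
  finally show ?thesis .
qed

lemma (in prob_space) invariance:
  fixes X :: "nat \<Rightarrow> 'a \<Rightarrow> real" and \<epsilon> :: "'a \<Rightarrow> 'e" and f :: "real \<Rightarrow> 'e \<Rightarrow> real"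
  assumes p: "0 < p"
    and d: "\<And>j. j < p \<Longrightarrow> distributed M lborel (X j) std_normal_density"
    and ind: "indep_vars (\<lambda>_. borel) X {..<p}"
    and eps: "\<epsilon> \<in> measurable M N"
    and indep: "indep_set
           (sets (vimage_algebra (space M) (\<lambda>\<omega>. \<lambda>j\<in>{..<p}. X j \<omega>) (PiM {..<p} (\<lambda>_. borel))))
           (sets (vimage_algebra (space M) \<epsilon> N))"
    and fm: "(\<lambda>(z, e). f z e) \<in> borel_measurable (borel \<Otimes>\<^sub>M N)"
    and \<pi>: "bij_betw \<pi> {..<p} {..<p}" and c: "\<And>i. i < p \<Longrightarrow> c i = 1 \<or> c i = -1"
    and cond: "\<And>i. i < p \<Longrightarrow> c i * \<beta> i = \<beta> (\<pi> i)"
    and B: "B \<in> sets borel" and j: "j < p"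
  shows "(\<integral>\<omega>. indicator B (f (\<Sum>i<p. X i \<omega> * \<beta> i) (\<epsilon> \<omega>)) * X j \<omega> \<partial>M)
       = (\<integral>\<omega>. indicator B (f (\<Sum>i<p. X i \<omega> * \<beta> i) (\<epsilon> \<omega>)) * (c j * X (\<pi> j) \<omega>) \<partial>M)"
proof -
  define I where "I = {..<p}"
  have I: "I \<noteq> {}" using p by (auto simp: I_def)
  have \<pi>I: "\<pi> i \<in> I" if "i \<in> I" for i using \<pi> that by (auto simp: bij_betw_def I_def)
  let ?Nn = "density lborel std_normal_density"
  let ?D = "PiM I (\<lambda>_. borel :: real measure)"
  define X' where "X' = (\<lambda>i \<omega>. c i * X (\<pi> i) \<omega>)"
  define R where "R = (\<lambda>x::nat\<Rightarrow>real. \<lambda>i\<in>I. c i * x (\<pi> i))"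
  have rv: "random_variable borel (X i)" if i: "i \<in> I" for i
    using distributed_measurable[OF d] i by (simp add: I_def)
  have Xv: "(\<lambda>\<omega>. \<lambda>i\<in>I. X i \<omega>) \<in> measurable M ?D"
    using rv by (intro measurable_restrict) auto
  have Rm: "R \<in> measurable ?D ?D"
    unfolding R_def
  proof (rule measurable_restrict)
    fix i assume i: "i \<in> I"
    have "(\<lambda>x::nat\<Rightarrow>real. x (\<pi> i)) \<in> borel_measurable ?D"
      by (rule measurable_component_singleton) (rule \<pi>I[OF i])
    then show "(\<lambda>x::nat\<Rightarrow>real. c i * x (\<pi> i)) \<in> measurable ?D borel"
      by (rule borel_measurable_times[OF borel_measurable_const])
  qed
  have X'v_eq: "(\<lambda>\<omega>. \<lambda>i\<in>I. X' i \<omega>) = (\<lambda>\<omega>. R (\<lambda>i\<in>I. X i \<omega>))"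
  proof (intro ext)
    fix \<omega> i show "(\<lambda>i\<in>I. X' i \<omega>) i = R (\<lambda>i\<in>I. X i \<omega>) i"
      by (cases "i \<in> I") (simp_all add: R_def X'_def \<pi>I)
  qed
  have X'v: "(\<lambda>\<omega>. \<lambda>i\<in>I. X' i \<omega>) \<in> measurable M ?D"
    unfolding X'v_eq using measurable_comp[OF Xv Rm] by (simp add: comp_def)
  have dI: "\<And>i. i \<in> I \<Longrightarrow> distributed M lborel (X i) std_normal_density" using d by (simp add: I_def)
  have cI: "\<And>i. i \<in> I \<Longrightarrow> c i = 1 \<or> c i = -1" using c by (simp add: I_def)
  note psf = perm_sign_family[OF I ind[folded I_def] dI \<pi>[folded I_def] cI]
  have pf1: "indep_vars (\<lambda>_. borel) X' I"
    unfolding X'_def by (rule psf(1))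
  have pf2: "\<And>i. i \<in> I \<Longrightarrow> distributed M lborel (X' i) std_normal_density"
    unfolding X'_def by (rule psf(2))
  have indep': "indep_set (sets (vimage_algebra (space M) (\<lambda>\<omega>. \<lambda>i\<in>I. X' i \<omega>) ?D)) (sets (vimage_algebra (space M) \<epsilon> N))"
    apply (rule indep_set_mono1[OF prob_space_axioms indep[folded I_def]])
    unfolding X'v_eq by (rule sets_vimage_comp_subset[OF Xv Rm])
  have law: "distr M (?D \<Otimes>\<^sub>M N) (\<lambda>\<omega>. ((\<lambda>i\<in>I. X i \<omega>), \<epsilon> \<omega>)) = PiM I (\<lambda>_. ?Nn) \<Otimes>\<^sub>M distr M N \<epsilon>"
  proof -
    have "distr M ?D (\<lambda>\<omega>. \<lambda>i\<in>I. X i \<omega>) = PiM I (\<lambda>_. ?Nn)"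
      by (rule PiM_law[OF I ind[folded I_def]]) (simp add: I_def d)
    then show ?thesis using pair_law[OF indep[folded I_def] Xv eps] by simp
  qed
  have law': "distr M (?D \<Otimes>\<^sub>M N) (\<lambda>\<omega>. ((\<lambda>i\<in>I. X' i \<omega>), \<epsilon> \<omega>)) = PiM I (\<lambda>_. ?Nn) \<Otimes>\<^sub>M distr M N \<epsilon>"
  proof -
    have "distr M ?D (\<lambda>\<omega>. \<lambda>i\<in>I. X' i \<omega>) = PiM I (\<lambda>_. ?Nn)"
      by (rule PiM_law[OF I pf1 pf2])
    then show ?thesis using pair_law[OF indep' X'v eps] by simp
  qed
  define F where "F = (\<lambda>z::(nat\<Rightarrow>real)\<times>'e. indicator B (f (\<Sum>i<p. fst z i * \<beta> i) (snd z)) * fst z j :: real)"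
  have Fm: "F \<in> borel_measurable (?D \<Otimes>\<^sub>M N)"
  proof -
    have inner: "(\<lambda>z::(nat\<Rightarrow>real)\<times>'e. (\<Sum>i<p. fst z i * \<beta> i, snd z)) \<in> measurable (?D \<Otimes>\<^sub>M N) (borel \<Otimes>\<^sub>M N)"
    proof (rule measurable_Pair[OF _ measurable_snd])
      show "(\<lambda>z::(nat\<Rightarrow>real)\<times>'e. \<Sum>i<p. fst z i * \<beta> i) \<in> borel_measurable (?D \<Otimes>\<^sub>M N)"
      proof (rule borel_measurable_sum[where f="\<lambda>i z. fst z i * \<beta> i" and S="{..<p}"])
        fix i assume i: "i \<in> {..<p}"
        have "(\<lambda>z::(nat\<Rightarrow>real)\<times>'e. fst z i) \<in> borel_measurable (?D \<Otimes>\<^sub>M N)"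
          using i unfolding I_def by (intro measurable_compose[OF measurable_fst]) (auto intro: measurable_component_singleton)
        then show "(\<lambda>z::(nat\<Rightarrow>real)\<times>'e. fst z i * \<beta> i) \<in> borel_measurable (?D \<Otimes>\<^sub>M N)"
          by (rule borel_measurable_times[OF _ borel_measurable_const])
      qed
    qed
    have g: "(\<lambda>z::(nat\<Rightarrow>real)\<times>'e. f (\<Sum>i<p. fst z i * \<beta> i) (snd z)) \<in> borel_measurable (?D \<Otimes>\<^sub>M N)"
      using measurable_comp[OF inner fm] by (simp add: comp_def)
    have gi: "(\<lambda>z::(nat\<Rightarrow>real)\<times>'e. indicator B (f (\<Sum>i<p. fst z i * \<beta> i) (snd z)) :: real) \<in> borel_measurable (?D \<Otimes>\<^sub>M N)"
      using measurable_comp[OF g borel_measurable_indicator[OF B]] by (simp add: comp_def)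
    have "(\<lambda>z::(nat\<Rightarrow>real)\<times>'e. fst z j) \<in> borel_measurable (?D \<Otimes>\<^sub>M N)"
      using j unfolding I_def by (intro measurable_compose[OF measurable_fst]) (auto intro: measurable_component_singleton)
    then show ?thesis unfolding F_def using gi by (rule borel_measurable_times[rotated])
  qed
  have "(\<integral>\<omega>. F ((\<lambda>i\<in>I. X i \<omega>), \<epsilon> \<omega>) \<partial>M) = (\<integral>z. F z \<partial>distr M (?D \<Otimes>\<^sub>M N) (\<lambda>\<omega>. ((\<lambda>i\<in>I. X i \<omega>), \<epsilon> \<omega>)))"
    by (rule integral_distr[symmetric]) (use Xv eps Fm in auto)
  also have "\<dots> = (\<integral>z. F z \<partial>distr M (?D \<Otimes>\<^sub>M N) (\<lambda>\<omega>. ((\<lambda>i\<in>I. X' i \<omega>), \<epsilon> \<omega>)))"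
    using law law' by simp
  also have "\<dots> = (\<integral>\<omega>. F ((\<lambda>i\<in>I. X' i \<omega>), \<epsilon> \<omega>) \<partial>M)"
    by (rule integral_distr) (use X'v eps Fm in auto)
  finally have *: "(\<integral>\<omega>. F ((\<lambda>i\<in>I. X i \<omega>), \<epsilon> \<omega>) \<partial>M) = (\<integral>\<omega>. F ((\<lambda>i\<in>I. X' i \<omega>), \<epsilon> \<omega>) \<partial>M)" .
  have e1: "F ((\<lambda>i\<in>I. X i \<omega>), \<epsilon> \<omega>) = indicator B (f (\<Sum>i<p. X i \<omega> * \<beta> i) (\<epsilon> \<omega>)) * X j \<omega>" for \<omega>
  proof -
    have s1: "(\<Sum>i<p. (\<lambda>i\<in>I. X i \<omega>) i * \<beta> i) = (\<Sum>i<p. X i \<omega> * \<beta> i)"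
      by (rule sum.cong[OF refl]) (simp add: I_def)
    have s2: "(\<lambda>i\<in>I. X i \<omega>) j = X j \<omega>" using j by (simp add: I_def)
    show ?thesis unfolding F_def fst_conv snd_conv s1 s2 ..
  qed
  have e2: "F ((\<lambda>i\<in>I. X' i \<omega>), \<epsilon> \<omega>) = indicator B (f (\<Sum>i<p. X i \<omega> * \<beta> i) (\<epsilon> \<omega>)) * (c j * X (\<pi> j) \<omega>)" for \<omega>
  proof -
    have s1: "(\<Sum>i<p. (\<lambda>i\<in>I. X' i \<omega>) i * \<beta> i) = (\<Sum>i<p. c i * X (\<pi> i) \<omega> * \<beta> i)"
      by (rule sum.cong[OF refl]) (simp add: I_def X'_def)
    have s2: "(\<lambda>i\<in>I. X' i \<omega>) j = c j * X (\<pi> j) \<omega>" using j by (simp add: I_def X'_def)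
    have s3: "(\<Sum>i<p. c i * X (\<pi> i) \<omega> * \<beta> i) = (\<Sum>i<p. X i \<omega> * \<beta> i)"
      using \<pi> cond by (rule sum_perm_sign)
    show ?thesis unfolding F_def fst_conv snd_conv s1 s2 s3 ..
  qed
  show ?thesis using * unfolding e1 e2 .
qed

lemma (in prob_space) Y_meas:
  fixes X :: "nat \<Rightarrow> 'a \<Rightarrow> real" and \<beta> :: "nat \<Rightarrow> real" and f :: "real \<Rightarrow> 'e \<Rightarrow> real"
  assumes rv: "\<And>i. i < p \<Longrightarrow> X i \<in> borel_measurable M"
    and eps: "\<epsilon> \<in> measurable M N"
    and fm: "(\<lambda>(z, e). f z e) \<in> borel_measurable (borel \<Otimes>\<^sub>M N)"
  shows "(\<lambda>\<omega>. f (\<Sum>i<p. X i \<omega> * \<beta> i) (\<epsilon> \<omega>)) \<in> borel_measurable M"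
proof -
  have s: "(\<lambda>\<omega>. \<Sum>i<p. X i \<omega> * \<beta> i) \<in> borel_measurable M"
  proof (rule borel_measurable_sum[where f="\<lambda>i \<omega>. X i \<omega> * \<beta> i" and S="{..<p}"])
    fix i assume "i \<in> {..<p}"
    then have "X i \<in> borel_measurable M" using rv by simp
    then show "(\<lambda>\<omega>. X i \<omega> * \<beta> i) \<in> borel_measurable M"
      by (rule borel_measurable_times[OF _ borel_measurable_const])
  qed
  have "(\<lambda>\<omega>. (\<Sum>i<p. X i \<omega> * \<beta> i, \<epsilon> \<omega>)) \<in> measurable M (borel \<Otimes>\<^sub>M N)"
    using s eps by (rule measurable_Pair)
  from measurable_comp[OF this fm] show ?thesis by (simp add: comp_def)
qed

lemma (in prob_space) sfs_vimage:
  assumes "Y \<in> borel_measurable M"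
  shows "sigma_finite_subalgebra M (vimage_algebra (space M) Y borel)"
proof (rule finite_measure_subalgebra_is_sigma_finite)
  show "finite_measure_subalgebra M (vimage_algebra (space M) Y borel)"
    unfolding finite_measure_subalgebra_def finite_measure_subalgebra_axioms_def subalgebra_def
    using sets_image_in_sets[OF refl assms] finite_measure_axioms by simp
qed

lemma (in prob_space) std_normal_integrable:
  assumes "distributed M lborel Z std_normal_density"
  shows "integrable M Z"
  using distributed_integrable_var[OF assms] integrable_std_normal_moment[of 1] by simp

lemma (in prob_space) condexp_perm:
  fixes X :: "nat \<Rightarrow> 'a \<Rightarrow> real" and \<epsilon> :: "'a \<Rightarrow> 'e" and f :: "real \<Rightarrow> 'e \<Rightarrow> real"
  assumes p: "0 < p"
    and d: "\<And>j. j < p \<Longrightarrow> distributed M lborel (X j) std_normal_density"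
    and ind: "indep_vars (\<lambda>_. borel) X {..<p}"
    and eps: "\<epsilon> \<in> measurable M N"
    and indep: "indep_set
           (sets (vimage_algebra (space M) (\<lambda>\<omega>. \<lambda>j\<in>{..<p}. X j \<omega>) (PiM {..<p} (\<lambda>_. borel))))
           (sets (vimage_algebra (space M) \<epsilon> N))"
    and fm: "(\<lambda>(z, e). f z e) \<in> borel_measurable (borel \<Otimes>\<^sub>M N)"
    and \<pi>: "bij_betw \<pi> {..<p} {..<p}" and c: "\<And>i. i < p \<Longrightarrow> c i = 1 \<or> c i = -1"
    and cond: "\<And>i. i < p \<Longrightarrow> c i * \<beta> i = \<beta> (\<pi> i)"
    and j: "j < p"
  shows "AE \<omega> in M. cond_exp_given M (\<lambda>\<omega>. f (\<Sum>i<p. X i \<omega> * \<beta> i) (\<epsilon> \<omega>)) (X j) \<omega>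
     = c j * cond_exp_given M (\<lambda>\<omega>. f (\<Sum>i<p. X i \<omega> * \<beta> i) (\<epsilon> \<omega>)) (X (\<pi> j)) \<omega>"
proof -
  define Y where "Y = (\<lambda>\<omega>. f (\<Sum>i<p. X i \<omega> * \<beta> i) (\<epsilon> \<omega>))"
  define F where "F = vimage_algebra (space M) Y borel"
  have rv: "X i \<in> borel_measurable M" if "i < p" for i
    using distributed_measurable[OF d[OF that]] by simp
  have Ym: "Y \<in> borel_measurable M" unfolding Y_def by (rule Y_meas[OF rv eps fm])
  interpret S: sigma_finite_subalgebra M F unfolding F_def by (rule sfs_vimage[OF Ym])
  have \<pi>j: "\<pi> j < p" using \<pi> j by (auto simp: bij_betw_def)
  have intj: "integrable M (X j)" by (rule std_normal_integrable[OF d[OF j]])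
  have int\<pi>: "integrable M (X (\<pi> j))" by (rule std_normal_integrable[OF d[OF \<pi>j]])
  have "AE \<omega> in M. real_cond_exp M F (X j) \<omega> = c j * real_cond_exp M F (X (\<pi> j)) \<omega>"
  proof (rule S.real_cond_exp_charact)
    show "integrable M (X j)" by (rule intj)
    show "integrable M (\<lambda>\<omega>. c j * real_cond_exp M F (X (\<pi> j)) \<omega>)"
      using S.real_cond_exp_int(1)[OF int\<pi>] by simp
    show "(\<lambda>\<omega>. c j * real_cond_exp M F (X (\<pi> j)) \<omega>) \<in> borel_measurable F"
      by (rule borel_measurable_times[OF borel_measurable_const borel_measurable_cond_exp])
    fix A assume A: "A \<in> sets F"
    have Yf: "Y \<in> space M \<rightarrow> space borel" by simp
    obtain B where B: "B \<in> sets borel" and AB: "A = Y -` B \<inter> space M"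
      using A unfolding F_def sets_vimage_algebra2[OF Yf] by blast
    have ind_eq: "(\<integral>\<omega>\<in>A. g \<omega> \<partial>M) = (\<integral>\<omega>. indicator B (Y \<omega>) * g \<omega> \<partial>M)" for g :: "'a \<Rightarrow> real"
      unfolding set_lebesgue_integral_def AB
      by (rule Bochner_Integration.integral_cong) (auto simp: indicator_def)
    have "(\<integral>\<omega>\<in>A. X j \<omega> \<partial>M) = (\<integral>\<omega>. indicator B (Y \<omega>) * (c j * X (\<pi> j) \<omega>) \<partial>M)"
      unfolding ind_eq Y_def using p d ind eps indep fm \<pi> c cond B j by (rule invariance)
    also have "\<dots> = (\<integral>\<omega>\<in>A. c j * X (\<pi> j) \<omega> \<partial>M)" by (rule ind_eq[symmetric])
    also have "\<dots> = c j * (\<integral>\<omega>\<in>A. X (\<pi> j) \<omega> \<partial>M)" by simp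
    also have "\<dots> = c j * (\<integral>\<omega>\<in>A. real_cond_exp M F (X (\<pi> j)) \<omega> \<partial>M)"
      using S.real_cond_exp_intA[OF int\<pi> A] by simp
    also have "\<dots> = (\<integral>\<omega>\<in>A. c j * real_cond_exp M F (X (\<pi> j)) \<omega> \<partial>M)" by simp
    finally show "(\<integral>\<omega>\<in>A. X j \<omega> \<partial>M) = (\<integral>\<omega>\<in>A. c j * real_cond_exp M F (X (\<pi> j)) \<omega> \<partial>M)" .
  qed
  then show ?thesis unfolding cond_exp_given_def F_def Y_def .
qed

lemma Var_cong_AE:
  assumes "AE x in M. V x = W x" "V \<in> borel_measurable M" "W \<in> borel_measurable M"
  shows "Var M V = Var M W"
proof -
  have e: "(\<integral>y. V y \<partial>M) = (\<integral>y. W y \<partial>M)" by (rule integral_cong_AE) (use assms in auto)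
  show ?thesis unfolding Var_def e
    by (rule integral_cong_AE) (use assms in auto)
qed

lemma Var_cmult: "Var M (\<lambda>x. a * V x) = a\<^sup>2 * Var M V"
proof -
  have "(\<lambda>x. (a * V x - (\<integral>y. a * V y \<partial>M))\<^sup>2) = (\<lambda>x. a\<^sup>2 * (V x - (\<integral>y. V y \<partial>M))\<^sup>2)"
    by (auto simp: fun_eq_iff power2_eq_square algebra_simps)
  then show ?thesis unfolding Var_def by simp
qed

lemma (in prob_space) std_normal_sq:
  assumes D: "distributed M lborel Z std_normal_density"
  shows "integrable M (\<lambda>x. (Z x)\<^sup>2)" "(\<integral>x. (Z x)\<^sup>2 \<partial>M) = 1"
proof -
  have Zm: "Z \<in> borel_measurable M" using distributed_measurable[OF D] by simp
  show i2: "integrable M (\<lambda>x. (Z x)\<^sup>2)"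
    using distributed_integrable[OF D, of "\<lambda>x. x\<^sup>2"] integrable_std_normal_moment[of 2] by simp
  have "variance Z = 1" by (rule standard_normal_distributed_variance[OF D])
  moreover have "expectation Z = 0" by (rule standard_normal_distributed_expectation[OF D])
  ultimately show "(\<integral>x. (Z x)\<^sup>2 \<partial>M) = 1"
    using variance_eq[OF std_normal_integrable[OF D] i2] by simp
qed

lemma (in prob_space) condvar_le:
  assumes sfs: "sigma_finite_subalgebra M F" and D: "distributed M lborel Z std_normal_density"
  shows "Var M (real_cond_exp M F Z) \<le> 1"
proof -
  interpret S: sigma_finite_subalgebra M F by (rule sfs)
  let ?G = "real_cond_exp M F Z"
  have iZ: "integrable M Z" by (rule std_normal_integrable[OF D])
  note sq = std_normal_sq[OF D]
  have J: "AE x in M. (?G x)\<^sup>2 \<le> real_cond_exp M F (\<lambda>x. (Z x)\<^sup>2) x"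
    using S.real_cond_exp_jensens_inequality(2)[OF iZ _ _ sq(1) convex_power2, of "-1" "1"] by simp
  have iG: "integrable M ?G" by (rule S.real_cond_exp_int(1)[OF iZ])
  have iC: "integrable M (real_cond_exp M F (\<lambda>x. (Z x)\<^sup>2))" by (rule S.real_cond_exp_int(1)[OF sq(1)])
  have iG2: "integrable M (\<lambda>x. (?G x)\<^sup>2)"
  proof (rule Bochner_Integration.integrable_bound[OF iC])
    show "(\<lambda>x. (?G x)\<^sup>2) \<in> borel_measurable M" by measurable
    show "AE x in M. norm ((?G x)\<^sup>2) \<le> norm (real_cond_exp M F (\<lambda>x. (Z x)\<^sup>2) x)"
      using J by eventually_elim auto
  qed
  have "(\<integral>x. (?G x)\<^sup>2 \<partial>M) \<le> (\<integral>x. real_cond_exp M F (\<lambda>x. (Z x)\<^sup>2) x \<partial>M)"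
    by (rule integral_mono_AE[OF iG2 iC J])
  also have "\<dots> = 1" using S.real_cond_exp_int(2)[OF sq(1)] sq(2) by simp
  finally have le: "(\<integral>x. (?G x)\<^sup>2 \<partial>M) \<le> 1" .
  have "Var M ?G = variance ?G" by (simp add: Var_def)
  also have "\<dots> = (\<integral>x. (?G x)\<^sup>2 \<partial>M) - (expectation ?G)\<^sup>2" by (rule variance_eq[OF iG iG2])
  also have "\<dots> \<le> 1" using le by (smt (verit) zero_le_power2)
  finally show ?thesis .
qed

theorem lemma1:
  fixes M :: "'a measure" and N :: "'e measure"
    and X :: "nat \<Rightarrow> 'a \<Rightarrow> real" and \<epsilon> :: "'a \<Rightarrow> 'e"
    and f :: "real \<Rightarrow> 'e \<Rightarrow> real" and \<beta> :: "nat \<Rightarrow> real"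
    and p s :: nat and A :: real
  assumes "prob_space M"
    and "\<And>j. j < p \<Longrightarrow> distributed M lborel (X j) std_normal_density"
    and "prob_space.indep_vars M (\<lambda>_. borel) X {..<p}"
    and "\<epsilon> \<in> measurable M N"
    and "prob_space.indep_set M
           (sets (vimage_algebra (space M) (\<lambda>\<omega>. \<lambda>j\<in>{..<p}. X j \<omega>) (PiM {..<p} (\<lambda>_. borel))))
           (sets (vimage_algebra (space M) \<epsilon> N))"
    and "(\<lambda>(z, e). f z e) \<in> borel_measurable (borel \<Otimes>\<^sub>M N)"
    and "0 < A"
    and "in_F A p s M N X f \<epsilon> \<beta>"
  defines "Y \<equiv> (\<lambda>\<omega>. f (\<Sum>j<p. X j \<omega> * \<beta> j) (\<epsilon> \<omega>))"
  shows "(\<forall>j<p. \<beta> j \<noteq> 0 \<longrightarrow>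
            A / real s \<le> Var M (cond_exp_given M Y (X j)) \<and>
            Var M (cond_exp_given M Y (X j)) \<le> 1 / real s) \<and>
         (\<forall>j<p. \<beta> j = 0 \<longrightarrow> Var M (cond_exp_given M Y (X j)) = 0)"
proof -
  interpret prob_space M by (rule assms(1))
  note d = assms(2) and ind = assms(3) and eps = assms(4) and indep = assms(5) and fm = assms(6)
  have HA: "\<forall>Z. distributed M lborel Z std_normal_density \<and> Z \<in> borel_measurable M \<and>
          indep_set (sets (vimage_algebra (space M) Z borel)) (sets (vimage_algebra (space M) \<epsilon> N))
          \<longrightarrow> Var M (cond_exp_given M (\<lambda>\<omega>. f (Z \<omega>) (\<epsilon> \<omega>)) Z) \<ge> A"
    and cardS: "card {j. j < p \<and> \<beta> j \<noteq> 0} = s"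
    and sgn: "\<forall>j<p. \<beta> j \<noteq> 0 \<longrightarrow> \<beta> j = 1 / sqrt (real s) \<or> \<beta> j = - 1 / sqrt (real s)"
    using assms(8) unfolding in_F_def by blast+
  show ?thesis
  proof (cases "p = 0")
    case True then show ?thesis by simp
  next
    case False
    then have p: "0 < p" by simp
    have rv: "X i \<in> borel_measurable M" if "i < p" for i
      using distributed_measurable[OF d[OF that]] by simp
    have Ym: "Y \<in> borel_measurable M" unfolding Y_def by (rule Y_meas[OF rv eps fm])
    define F where "F = vimage_algebra (space M) Y borel"
    have sfs: "sigma_finite_subalgebra M F" unfolding F_def by (rule sfs_vimage[OF Ym])
    interpret S: sigma_finite_subalgebra M F by (rule sfs)
    define E where "E = (\<lambda>i. cond_exp_given M Y (X i))"
    have E_eq: "E i = real_cond_exp M F (X i)" for i by (simp add: E_def cond_exp_given_def F_def)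
    have Em: "E i \<in> borel_measurable M" for i unfolding E_eq by simp
    have perm: "AE \<omega> in M. E j \<omega> = c j * E (\<pi> j) \<omega>"
      if \<pi>: "bij_betw \<pi> {..<p} {..<p}" and c: "\<And>i. i < p \<Longrightarrow> c i = 1 \<or> c i = -1"
        and cond: "\<And>i. i < p \<Longrightarrow> c i * \<beta> i = \<beta> (\<pi> i)" and j: "j < p" for \<pi> c j
      unfolding E_def Y_def using p d ind eps indep fm \<pi> c cond j by (rule condexp_perm)
    have zero: "Var M (cond_exp_given M Y (X j)) = 0" if j: "j < p" and bj: "\<beta> j = 0" for j
    proof -
      define c where "c = (\<lambda>i. if i = j then -1 else (1::real))"
      have "AE \<omega> in M. E j \<omega> = c j * E ((\<lambda>i. i) j) \<omega>"
        by (rule perm) (auto simp: c_def bj j bij_betw_def)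
      then have "AE \<omega> in M. E j \<omega> = 0" by eventually_elim (simp add: c_def)
      then have "Var M (E j) = Var M (\<lambda>_. 0)" by (rule Var_cong_AE) (auto simp: Em)
      then show ?thesis by (simp add: E_def Var_def)
    qed
    define Sup where "Sup = {j. j < p \<and> \<beta> j \<noteq> 0}"
    have finS: "finite Sup" unfolding Sup_def by simp
    have SupI: "Sup \<subseteq> {..<p}" unfolding Sup_def by auto
    have supp: "A / real s \<le> Var M (cond_exp_given M Y (X j)) \<and> Var M (cond_exp_given M Y (X j)) \<le> 1 / real s"
      if j: "j < p" and bj: "\<beta> j \<noteq> 0" for j
    proof -
      have jS: "j \<in> Sup" using j bj by (simp add: Sup_def)
      have cardS': "card Sup = s" using cardS by (simp add: Sup_def)
      have spos: "0 < s" using finS jS cardS' by (metis card_gt_0_iff empty_iff)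
      have bsq: "(\<beta> i)\<^sup>2 = 1 / real s" if "i \<in> Sup" for i
      proof -
        have "\<beta> i = 1 / sqrt (real s) \<or> \<beta> i = - 1 / sqrt (real s)" using sgn that by (simp add: Sup_def)
        then show ?thesis using spos by (auto simp: power_divide)
      qed
      have pair: "AE \<omega> in M. \<beta> j * E j \<omega> = \<beta> k * E k \<omega>" if k: "k \<in> Sup" for k
      proof -
        define \<sigma> where "\<sigma> = \<beta> j * \<beta> k * real s"
        have kp: "k < p" using k by (simp add: Sup_def)
        have sj: "\<sigma> * \<beta> j = \<beta> k"
        proof -
          have "\<sigma> * \<beta> j = (\<beta> j)\<^sup>2 * real s * \<beta> k" by (simp add: \<sigma>_def power2_eq_square mult_ac)
          then show ?thesis using bsq[OF jS] spos by simp
        qed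
        have sk: "\<sigma> * \<beta> k = \<beta> j"
        proof -
          have "\<sigma> * \<beta> k = (\<beta> k)\<^sup>2 * real s * \<beta> j" by (simp add: \<sigma>_def power2_eq_square mult_ac)
          then show ?thesis using bsq[OF k] spos by simp
        qed
        have \<sigma>pm: "\<sigma> = 1 \<or> \<sigma> = -1"
        proof -
          have a: "\<beta> j = 1 / sqrt (real s) \<or> \<beta> j = - 1 / sqrt (real s)" using sgn j bj by simp
          have b: "\<beta> k = 1 / sqrt (real s) \<or> \<beta> k = - 1 / sqrt (real s)" using sgn k by (simp add: Sup_def)
          have ss: "sqrt (real s) * sqrt (real s) = real s" using spos by simp
          have sp: "sqrt (real s) > 0" using spos by simp
          have e: "\<sigma> = (\<beta> j * sqrt (real s)) * (\<beta> k * sqrt (real s))"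
            unfolding \<sigma>_def using ss by (simp add: mult_ac)
          have a': "\<beta> j * sqrt (real s) = 1 \<or> \<beta> j * sqrt (real s) = -1" using a sp by auto
          have b': "\<beta> k * sqrt (real s) = 1 \<or> \<beta> k * sqrt (real s) = -1" using b sp by auto
          show ?thesis unfolding e using a' b' by auto
        qed
        define \<pi> where "\<pi> = (\<lambda>i. if i = j then k else if i = k then j else i)"
        define c where "c = (\<lambda>i. if i = j \<or> i = k then \<sigma> else 1)"
        have \<pi>b: "bij_betw \<pi> {..<p} {..<p}"
          by (rule bij_betwI[where g=\<pi>]) (auto simp: \<pi>_def j kp)
        have "AE \<omega> in M. E j \<omega> = c j * E (\<pi> j) \<omega>"
        proof (rule perm[OF \<pi>b _ _ j])
          show "c i = 1 \<or> c i = -1" if "i < p" for i using \<sigma>pm by (auto simp: c_def)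
          show "c i * \<beta> i = \<beta> (\<pi> i)" if "i < p" for i
            using sj sk by (auto simp: c_def \<pi>_def)
        qed
        then show ?thesis
        proof eventually_elim
          case (elim \<omega>)
          then have "E j \<omega> = \<sigma> * E k \<omega>" by (simp add: c_def \<pi>_def)
          then have "\<beta> j * E j \<omega> = (\<sigma> * \<beta> j) * E k \<omega>" by (simp add: mult_ac)
          then show ?case using sj by simp
        qed
      qed
      define Z where "Z = (\<lambda>\<omega>. \<Sum>i<p. X i \<omega> * \<beta> i)"
      define G where "G = cond_exp_given M Y Z"
      have YZ: "(\<lambda>\<omega>. f (Z \<omega>) (\<epsilon> \<omega>)) = Y" by (simp add: Z_def Y_def)
      have G_eq: "G = real_cond_exp M F Z" by (simp add: G_def cond_exp_given_def F_def)
      have Gm: "G \<in> borel_measurable M" unfolding G_eq by simp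
      have intX: "integrable M (X i)" if "i < p" for i by (rule std_normal_integrable[OF d[OF that]])
      define fi where "fi = (\<lambda>i x. if i < p then \<beta> i * X i x else 0)"
      have intfi: "integrable M (fi i)" for i
        using intX by (cases "i < p") (auto simp: fi_def)
      have Zfi: "Z = (\<lambda>x. \<Sum>i<p. fi i x)"
        by (auto simp: fun_eq_iff Z_def fi_def mult.commute intro!: sum.cong)
      have AEsum: "AE x in M. G x = (\<Sum>i<p. real_cond_exp M F (fi i) x)"
        unfolding G_eq Zfi by (rule S.real_cond_exp_sum[OF intfi])
      have AEi: "AE x in M. \<forall>i\<in>{..<p}. real_cond_exp M F (fi i) x = \<beta> i * E i x"
      proof (rule eventually_ball_finite[OF finite_lessThan], rule ballI)
        fix i assume "i \<in> {..<p}"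
        then have "fi i = (\<lambda>x. \<beta> i * X i x)" by (auto simp: fi_def)
        then show "AE x in M. real_cond_exp M F (fi i) x = \<beta> i * E i x"
          using S.real_cond_exp_cmult[OF intX[OF \<open>i \<in> {..<p}\<close>[simplified]], of "\<beta> i"]
          by (simp add: E_eq)
      qed
      have AEp: "AE x in M. \<forall>k\<in>Sup. \<beta> j * E j x = \<beta> k * E k x"
        by (rule eventually_ball_finite[OF finS]) (use pair in blast)
      have AEG: "AE x in M. E j x = (1 / (real s * \<beta> j)) * G x"
        using AEsum AEi AEp
      proof eventually_elim
        case (elim x)
        have "G x = (\<Sum>i<p. \<beta> i * E i x)" using elim(1,2) by simp
        also have "\<dots> = (\<Sum>i\<in>Sup. \<beta> i * E i x)"
          by (rule sum.mono_neutral_right) (auto simp: Sup_def)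
        also have "\<dots> = (\<Sum>i\<in>Sup. \<beta> j * E j x)" using elim(3) by (intro sum.cong) auto
        also have "\<dots> = real s * (\<beta> j * E j x)" using cardS' by simp
        finally have "G x = real s * (\<beta> j * E j x)" .
        then show ?case using spos bj by (simp add: field_simps)
      qed
      have VarE: "Var M (E j) = Var M G / real s"
      proof -
        have "Var M (E j) = Var M (\<lambda>x. (1 / (real s * \<beta> j)) * G x)"
          by (rule Var_cong_AE[OF AEG Em]) (use Gm in simp)
        also have "\<dots> = (1 / (real s * \<beta> j))\<^sup>2 * Var M G" by (rule Var_cmult)
        also have "(1 / (real s * \<beta> j))\<^sup>2 = 1 / real s"
        proof -
          have "(1 / (real s * \<beta> j))\<^sup>2 = 1 / ((real s)\<^sup>2 * (\<beta> j)\<^sup>2)"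
            by (simp add: power_divide power_mult_distrib)
          also have "\<dots> = 1 / ((real s)\<^sup>2 * (1 / real s))" using bsq[OF jS] by simp
          also have "\<dots> = 1 / real s" using spos by (simp add: power2_eq_square)
          finally show ?thesis .
        qed
        finally show ?thesis by simp
      qed
      have ZS: "Z = (\<lambda>\<omega>. \<Sum>i\<in>Sup. \<beta> i * X i \<omega>)"
      proof
        fix \<omega>
        have "Z \<omega> = (\<Sum>i\<in>Sup. X i \<omega> * \<beta> i)"
          unfolding Z_def by (rule sum.mono_neutral_right) (auto simp: Sup_def)
        then show "Z \<omega> = (\<Sum>i\<in>Sup. \<beta> i * X i \<omega>)" by (simp add: mult.commute)
      qed
      have DZ: "distributed M lborel Z std_normal_density"
      proof -
        have indS: "indep_vars (\<lambda>_. borel) (\<lambda>i \<omega>. \<beta> i * X i \<omega>) Sup"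
          using indep_vars_compose2[OF indep_vars_subset[OF ind SupI], where Y="\<lambda>i x. \<beta> i * x" and N="\<lambda>_. borel"]
          by auto
        have dS: "distributed M lborel (\<lambda>\<omega>. \<beta> i * X i \<omega>) (normal_density 0 \<bar>\<beta> i\<bar>)" if "i \<in> Sup" for i
        proof -
          have "distributed M lborel (\<lambda>\<omega>. 0 + \<beta> i * X i \<omega>) (normal_density (0 + \<beta> i * 0) (\<bar>\<beta> i\<bar> * 1))"
            using that by (intro normal_density_affine d) (auto simp: Sup_def)
          then show ?thesis by simp
        qed
        have "distributed M lborel (\<lambda>\<omega>. \<Sum>i\<in>Sup. \<beta> i * X i \<omega>) (normal_density (\<Sum>i\<in>Sup. 0) (sqrt (\<Sum>i\<in>Sup. (\<bar>\<beta> i\<bar>)\<^sup>2)))"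
          using finS jS indS dS by (intro sum_indep_normal) (auto simp: Sup_def)
        moreover have "(\<Sum>i\<in>Sup. (\<bar>\<beta> i\<bar>)\<^sup>2) = 1"
        proof -
          have "(\<Sum>i\<in>Sup. (\<bar>\<beta> i\<bar>)\<^sup>2) = (\<Sum>i\<in>Sup. 1 / real s)" using bsq by (intro sum.cong) auto
          also have "\<dots> = 1" using cardS' spos by simp
          finally show ?thesis .
        qed
        ultimately show ?thesis unfolding ZS by simp
      qed
      have Zm: "Z \<in> borel_measurable M" using distributed_measurable[OF DZ] by simp
      have indZ: "indep_set (sets (vimage_algebra (space M) Z borel)) (sets (vimage_algebra (space M) \<epsilon> N))"
      proof (rule indep_set_mono1[OF prob_space_axioms indep])
        let ?D = "PiM {..<p} (\<lambda>_. borel :: real measure)"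
        have Xv: "(\<lambda>\<omega>. \<lambda>i\<in>{..<p}. X i \<omega>) \<in> measurable M ?D"
          using rv by (intro measurable_restrict) auto
        have h: "(\<lambda>x. \<Sum>i<p. x i * \<beta> i) \<in> borel_measurable ?D" by measurable
        have "(\<lambda>\<omega>. (\<lambda>x. \<Sum>i<p. x i * \<beta> i) (\<lambda>i\<in>{..<p}. X i \<omega>)) = Z"
          by (auto simp: fun_eq_iff Z_def intro!: sum.cong)
        with sets_vimage_comp_subset[OF Xv h]
        show "sets (vimage_algebra (space M) Z borel) \<subseteq> sets (vimage_algebra (space M) (\<lambda>\<omega>. \<lambda>j\<in>{..<p}. X j \<omega>) ?D)"
          by simp
      qed
      have "A \<le> Var M (cond_exp_given M (\<lambda>\<omega>. f (Z \<omega>) (\<epsilon> \<omega>)) Z)"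
        using HA DZ Zm indZ by blast
      then have lowG: "A \<le> Var M G" unfolding YZ G_def .
      have upG: "Var M G \<le> 1" unfolding G_eq by (rule condvar_le[OF sfs DZ])
      have "A / real s \<le> Var M G / real s" using lowG spos by (simp add: divide_right_mono)
      moreover have "Var M G / real s \<le> 1 / real s" using upG spos by (simp add: divide_right_mono)
      ultimately show ?thesis using VarE by (simp add: E_def)
    qed
    show ?thesis using zero supp by blast
  qed
qed

end
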